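(* Let $\mu,\sigma$ be nonzero constants, let $K$ be an open interval not containing $0$, and let $W$ be a smooth function on $K$ such that $R(z):=(zW(z))'$ satisfies $R(z)\neq0$ for all $z\in K$. Then $R$ satisfies $$-\sigma zRR'''+\sigma zR'R''-2\sigma RR''-9\mu R^2R'-zR'+2R=0$$ on $K$ if and only if there is a constant $c_1$ such that $W$ satisfies the third-order equation $$\sigma W'''=-3\sigma\frac{W''}{z}-9\mu (W')^2-9\mu\frac{WW'}{z}+c_1\frac{W'}{z^2}+c_1\frac{W}{z^3}+\frac1z$$ on $K$. *)

theory Defs
  imports "HOL-Analysis.Analysis"
begin

definition smooth_on :: "real set \<Rightarrow> (real \<Rightarrow> real) \<Rightarrow> bool" where
  "smooth_on K f \<longleftrightarrow> (\<forall>n. \<forall>x\<in>K. ((deriv ^^ n) f) differentiable (at x))"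

end

theory Submission
  imports Defs
begin

lemma deriv_on_open:
  fixes f g g' :: "real \<Rightarrow> real"
  assumes "open K" "\<And>x. x\<in>K \<Longrightarrow> f x = g x"
    "\<And>x. x\<in>K \<Longrightarrow> (g has_real_derivative g' x) (at x)"
    and "x \<in> K"
  shows "deriv f x = g' x"
proof -
  have "(f has_real_derivative g' x) (at x)"
    by (rule has_field_derivative_transform_within_open[of g _ _ K])
       (use assms in auto)
  then show ?thesis by (rule DERIV_imp_deriv)
qed

theorem mainTheorem6:
  fixes \<mu> \<sigma> :: real and K :: "real set" and W R :: "real \<Rightarrow> real"
  assumes "\<mu> \<noteq> 0" and "\<sigma> \<noteq> 0"
    and "open K" and "is_interval K" and "K \<noteq> {}" and "0 \<notin> K"
    and "smooth_on K W"
    and "R = deriv (\<lambda>z. z * W z)"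
    and "\<forall>z\<in>K. R z \<noteq> 0"
  shows "(\<forall>z\<in>K.
            - \<sigma> * z * R z * (deriv ^^ 3) R z + \<sigma> * z * deriv R z * (deriv ^^ 2) R z
            - 2 * \<sigma> * R z * (deriv ^^ 2) R z - 9 * \<mu> * (R z)^2 * deriv R z
            - z * deriv R z + 2 * R z = 0)
     \<longleftrightarrow>
     (\<exists>c1::real. \<forall>z\<in>K.
            \<sigma> * (deriv ^^ 3) W z =
              - 3 * \<sigma> * (deriv ^^ 2) W z / z - 9 * \<mu> * (deriv W z)^2
              - 9 * \<mu> * W z * deriv W z / z + c1 * deriv W z / z^2
              + c1 * W z / z^3 + 1 / z)"
proof -
  define Wn where "Wn n = (deriv ^^ n) W" for n
  have D: "(Wn n has_real_derivative Wn (Suc n) x) (at x)" if "x \<in> K" for n x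
  proof -
    have "(deriv ^^ n) W differentiable (at x)"
      using assms(7) that unfolding smooth_on_def by blast
    then show ?thesis unfolding Wn_def
      by (simp add: DERIV_deriv_iff_real_differentiable)
  qed
  have W0: "Wn 0 = W" by (simp add: Wn_def)
  have R0: "R x = Wn 0 x + x * Wn 1 x" if "x \<in> K" for x
  proof -
    have "((\<lambda>z. z * Wn 0 z) has_real_derivative (1 * Wn 0 x + x * Wn 1 x)) (at x)"
      using D[OF that, of 0] by (auto intro!: derivative_eq_intros)
    then show ?thesis using assms(8) W0 by (simp add: DERIV_imp_deriv)
  qed
  have R1: "deriv R x = 2 * Wn 1 x + x * Wn 2 x" if "x \<in> K" for x
  proof (rule deriv_on_open[OF assms(3) R0 _ that])
    fix y assume y: "y \<in> K"
    show "((\<lambda>x. Wn 0 x + x * Wn 1 x) has_real_derivative 2 * Wn 1 y + y * Wn 2 y) (at y)"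
      using D[OF y, of 0] D[OF y, of 1]
      by (auto intro!: derivative_eq_intros simp: numeral_2_eq_2)
  qed
  have R2: "(deriv ^^ 2) R x = 3 * Wn 2 x + x * Wn 3 x" if "x \<in> K" for x
  proof -
    have "deriv (deriv R) x = 3 * Wn 2 x + x * Wn 3 x"
    proof (rule deriv_on_open[OF assms(3) R1 _ that])
      fix y assume y: "y \<in> K"
      show "((\<lambda>x. 2 * Wn 1 x + x * Wn 2 x) has_real_derivative 3 * Wn 2 y + y * Wn 3 y) (at y)"
        using D[OF y, of 1] D[OF y, of 2]
        by (auto intro!: derivative_eq_intros simp: numeral_2_eq_2 numeral_3_eq_3)
    qed
    then show ?thesis by (simp add: numeral_2_eq_2)
  qed
  have R3: "(deriv ^^ 3) R x = 4 * Wn 3 x + x * Wn 4 x" if "x \<in> K" for x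
  proof -
    have "deriv ((deriv ^^ 2) R) x = 4 * Wn 3 x + x * Wn 4 x"
    proof (rule deriv_on_open[OF assms(3) R2 _ that])
      fix y assume y: "y \<in> K"
      show "((\<lambda>x. 3 * Wn 2 x + x * Wn 3 x) has_real_derivative 4 * Wn 3 y + y * Wn 4 y) (at y)"
        using D[OF y, of 2] D[OF y, of 3]
        by (auto intro!: derivative_eq_intros simp: numeral_2_eq_2 numeral_3_eq_3 eval_nat_numeral)
    qed
    then show ?thesis by (simp add: eval_nat_numeral)
  qed
  define N where "N z = \<sigma>*z^3*Wn 3 z + 3*\<sigma>*z^2*Wn 2 z + 9*\<mu>*z^3*(Wn 1 z)^2
     + 9*\<mu>*z^2*Wn 0 z*Wn 1 z - z^2" for z
  define N' where "N' z = \<sigma>*(3*z^2*Wn 3 z + z^3*Wn 4 z) + 3*\<sigma>*(2*z*Wn 2 z + z^2*Wn 3 z)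
     + 9*\<mu>*(3*z^2*(Wn 1 z)^2 + z^3*(2*Wn 1 z*Wn 2 z))
     + 9*\<mu>*(2*z*Wn 0 z*Wn 1 z + z^2*(Wn 1 z*Wn 1 z + Wn 0 z*Wn 2 z)) - 2*z" for z
  define Dn where "Dn z = Wn 0 z + z * Wn 1 z" for z
  define F where "F z = N z / Dn z" for z
  define ER where "ER z = - \<sigma> * z * R z * (deriv ^^ 3) R z + \<sigma> * z * deriv R z * (deriv ^^ 2) R z
            - 2 * \<sigma> * R z * (deriv ^^ 2) R z - 9 * \<mu> * (R z)^2 * deriv R z
            - z * deriv R z + 2 * R z" for z
  have Dnz: "Dn z \<noteq> 0" if "z \<in> K" for z using assms(9) R0 that Dn_def by auto
  have znz: "z \<noteq> 0" if "z \<in> K" for z using assms(6) that by auto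
  have FD: "(F has_real_derivative (N' z * Dn z - N z * (2 * Wn 1 z + z * Wn 2 z)) / (Dn z)^2) (at z)"
    if z: "z \<in> K" for z
    unfolding F_def[abs_def] N_def[abs_def] Dn_def[abs_def]
    using D[OF z, of 0] D[OF z, of 1] D[OF z, of 2] D[OF z, of 3] Dnz[OF z]
    apply (auto intro!: derivative_eq_intros simp: Dn_def)
    apply (simp add: N'_def N_def Dn_def eval_nat_numeral power2_eq_square field_simps)
    done
  have key: "(N' z * Dn z - N z * (2 * Wn 1 z + z * Wn 2 z)) = - z * ER z" if z: "z \<in> K" for z
    unfolding ER_def R0[OF z] R1[OF z] R2[OF z] R3[OF z] N'_def N_def Dn_def
    by (simp add: algebra_simps power2_eq_square power3_eq_cube)
  have FD': "(F has_real_derivative (- z * ER z / (Dn z)^2)) (at z)" if z: "z \<in> K" for z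
    using FD[OF z] key[OF z] by simp
  have eqv: "(\<sigma> * (deriv ^^ 3) W z =
              - 3 * \<sigma> * (deriv ^^ 2) W z / z - 9 * \<mu> * (deriv W z)^2
              - 9 * \<mu> * W z * deriv W z / z + c * deriv W z / z^2
              + c * W z / z^3 + 1 / z) \<longleftrightarrow> F z = c" if z: "z \<in> K" for z c
  proof -
    have a: "(deriv ^^ 3) W = Wn 3" "(deriv ^^ 2) W = Wn 2" "deriv W = Wn 1" "W = Wn 0"
      by (simp_all add: Wn_def)
    have "(\<sigma> * (deriv ^^ 3) W z =
              - 3 * \<sigma> * (deriv ^^ 2) W z / z - 9 * \<mu> * (deriv W z)^2
              - 9 * \<mu> * W z * deriv W z / z + c * deriv W z / z^2
              + c * W z / z^3 + 1 / z) \<longleftrightarrow> N z = c * Dn z"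
      unfolding a(1-3) N_def Dn_def W0 using znz[OF z]
      by (simp add: field_simps power2_eq_square power3_eq_cube)
    also have "\<dots> \<longleftrightarrow> F z = c" using Dnz[OF z] by (auto simp: F_def field_simps)
    finally show ?thesis .
  qed
  have cK: "convex K" using assms(4) by (rule is_interval_convex)
  show ?thesis
  proof
    assume h: "\<forall>z\<in>K. - \<sigma> * z * R z * (deriv ^^ 3) R z + \<sigma> * z * deriv R z * (deriv ^^ 2) R z
            - 2 * \<sigma> * R z * (deriv ^^ 2) R z - 9 * \<mu> * (R z)^2 * deriv R z
            - z * deriv R z + 2 * R z = 0"
    have "\<exists>c. \<forall>x\<in>K. F x = c"
    proof (rule has_field_derivative_zero_constant[OF cK])
      fix x assume x: "x \<in> K"
      have "ER x = 0" using h x unfolding ER_def by blast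
      then have "(F has_real_derivative 0) (at x)" using FD'[OF x] by simp
      then show "(F has_real_derivative 0) (at x within K)" by (rule has_field_derivative_at_within)
    qed
    then obtain c where "\<forall>x\<in>K. F x = c" by blast
    then show "\<exists>c1::real. \<forall>z\<in>K.
            \<sigma> * (deriv ^^ 3) W z =
              - 3 * \<sigma> * (deriv ^^ 2) W z / z - 9 * \<mu> * (deriv W z)^2
              - 9 * \<mu> * W z * deriv W z / z + c1 * deriv W z / z^2
              + c1 * W z / z^3 + 1 / z" using eqv by blast
  next
    assume "\<exists>c1::real. \<forall>z\<in>K.
            \<sigma> * (deriv ^^ 3) W z =
              - 3 * \<sigma> * (deriv ^^ 2) W z / z - 9 * \<mu> * (deriv W z)^2
              - 9 * \<mu> * W z * deriv W z / z + c1 * deriv W z / z^2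
              + c1 * W z / z^3 + 1 / z"
    then obtain c where c: "\<forall>z\<in>K. F z = c" using eqv by blast
    have "ER z = 0" if z: "z \<in> K" for z
    proof -
      have "((\<lambda>_. c) has_real_derivative 0) (at z)" by simp
      then have "(F has_real_derivative 0) (at z)"
        by (rule has_field_derivative_transform_within_open[OF _ assms(3) z]) (use c in auto)
      then have "- z * ER z / (Dn z)^2 = 0" using FD'[OF z] DERIV_unique by blast
      then show ?thesis using znz[OF z] Dnz[OF z] by simp
    qed
    then show "\<forall>z\<in>K. - \<sigma> * z * R z * (deriv ^^ 3) R z + \<sigma> * z * deriv R z * (deriv ^^ 2) R z
            - 2 * \<sigma> * R z * (deriv ^^ 2) R z - 9 * \<mu> * (R z)^2 * deriv R z
            - z * deriv R z + 2 * R z = 0" unfolding ER_def by blast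
  qed
qed

end
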